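(* For $n_1,n_2\ge 1$ and irreducible vectors $\vec{\mathsf b}\in\mathrm{Vec}(\mathrm{E(NE)}^{n_1-1})$, $\vec{\mathsf b}'\in\mathrm{Vec}(\mathrm{E(NE)}^{n_2-1})$, define $$\vec{\mathsf b}+\vec{\mathsf b}'=(\mathsf b_0,\dots,\mathsf b_{2n_1-1},\ \mathsf b'_0+n_1,\dots,\mathsf b'_{2n_2-1}+n_1)\in\mathrm{Vec}(\mathrm{E(NE)}^{n_1+n_2-1}).$$ Then every $\vec{\mathsf b}\in\mathrm{Vec}(\mathrm{E(NE)}^{n-1})$ ($n\ge1$) can be written as a sum $\vec{\mathsf b}^{(1)}+\cdots+\vec{\mathsf b}^{(r)}$ of irreducible vectors $\vec{\mathsf b}^{(i)}\in\mathrm{Vec}(\mathrm{E(NE)}^{k_i-1})$ with $k_1+\cdots+k_r=n$ (the sum being taken left to right, with the shift by the total size of the preceding summands). Moreover, $\vec{\mathsf b}$ is $t$-$\mathsf{Pop}$-sortable in $\mathrm{Vec}(\mathrm{E(NE)}^{n-1})$ if and only if each $\vec{\mathsf b}^{(i)}$ is $t$-$\mathsf{Pop}$-sortable in $\mathrm{Vec}(\mathrm{E(NE)}^{k_i-1})$.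
   Context: For $\nu=\mathrm{E(NE)}^{n-1}$ (a path of $2n-1$ steps ending at height $n-1$), $\mathrm{Vec}(\nu)$ is the set of integer vectors $(\mathsf b_0,\dots,\mathsf b_{2n-1})$ with $\mathsf b_{2k+1}=k$ for $0\le k\le n-1$, $\lfloor i/2\rfloor\le\mathsf b_i\le n-1$ for all $i$, and such that $\mathsf b_i=k$ implies $\mathsf b_j\le k$ for all $i+1\le j\le 2k+1$. With the componentwise order it is a finite lattice isomorphic to the Tamari lattice $\mathrm{Tam}_n$. A vector is irreducible if $\mathsf b_0=\mathsf b_{2n-1}$ (i.e. $\mathsf b_0=n-1$). For a finite lattice $M$ with minimum $\hat0$, $\mathsf{Pop}_M(x)=\bigwedge(\{y: y\lessdot x\}\cup\{x\})$ and $x$ is $t$-$\mathsf{Pop}$-sortable if $\mathsf{Pop}_M^t(x)=\hat 0$. *)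

theory Defs
  imports Main
begin

text \<open>Vectors (b_0,...,b_{2n-1}) are lists of length 2n.  Vec n is Vec(E(NE)^(n-1)).\<close>
definition Vec :: "nat \<Rightarrow> nat list set" where
  "Vec n = {b. length b = 2 * n
     \<and> (\<forall>k<n. b ! (2 * k + 1) = k)
     \<and> (\<forall>i<2 * n. i div 2 \<le> b ! i \<and> b ! i \<le> n - 1)
     \<and> (\<forall>i<2 * n. \<forall>j. i + 1 \<le> j \<and> j \<le> 2 * (b ! i) + 1 \<longrightarrow> b ! j \<le> b ! i)}"

definition vle :: "nat list \<Rightarrow> nat list \<Rightarrow> bool" where
  "vle x y = list_all2 (\<le>) x y"

definition vless :: "nat list \<Rightarrow> nat list \<Rightarrow> bool" where
  "vless x y = (vle x y \<and> x \<noteq> y)"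

definition irreducible_vec :: "nat \<Rightarrow> nat list \<Rightarrow> bool" where
  "irreducible_vec n b = (b ! 0 = b ! (2 * n - 1))"

definition covered_by :: "nat list set \<Rightarrow> nat list \<Rightarrow> nat list \<Rightarrow> bool" where
  "covered_by M y x = (y \<in> M \<and> x \<in> M \<and> vless y x \<and> \<not> (\<exists>z\<in>M. vless y z \<and> vless z x))"

definition meet_in :: "nat list set \<Rightarrow> nat list set \<Rightarrow> nat list" where
  "meet_in M S = (THE z. z \<in> M \<and> (\<forall>s\<in>S. vle z s) \<and>
                     (\<forall>w\<in>M. (\<forall>s\<in>S. vle w s) \<longrightarrow> vle w z))"

definition bot_in :: "nat list set \<Rightarrow> nat list" where
  "bot_in M = (THE z. z \<in> M \<and> (\<forall>w\<in>M. vle z w))"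

definition Pop :: "nat list set \<Rightarrow> nat list \<Rightarrow> nat list" where
  "Pop M x = meet_in M ({y. covered_by M y x} \<union> {x})"

definition pop_sortable :: "nat list set \<Rightarrow> nat \<Rightarrow> nat list \<Rightarrow> bool" where
  "pop_sortable M t x = ((Pop M ^^ t) x = bot_in M)"

definition vplus :: "nat \<Rightarrow> nat list \<Rightarrow> nat list \<Rightarrow> nat list" where
  "vplus n1 b b' = b @ map (\<lambda>x. x + n1) b'"

definition vsum :: "(nat \<times> nat list) list \<Rightarrow> nat \<times> nat list" where
  "vsum ps = foldl (\<lambda>(m, acc) (k, v). (m + k, vplus m acc v)) (0, []) ps"

end

theory Submission
  imports Defs
begin


lemma vle_nth: "vle x y \<longleftrightarrow> length x = length y \<and> (\<forall>i<length x. x ! i \<le> y ! i)"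
  unfolding vle_def by (simp add: list_all2_conv_all_nth)

lemma vle_refl[simp]: "vle x x" by (simp add: vle_nth)

lemma vle_trans: "vle x y \<Longrightarrow> vle y z \<Longrightarrow> vle x z"
  unfolding vle_nth by (metis order_trans)

lemma vle_antisym: "vle x y \<Longrightarrow> vle y x \<Longrightarrow> x = y"
  by (auto simp: vle_nth intro!: nth_equalityI intro: antisym)

lemma Vec_length: "b \<in> Vec n \<Longrightarrow> length b = 2 * n"
  by (simp add: Vec_def)

lemma Vec_finite: "finite (Vec n)"
proof -
  have "Vec n \<subseteq> {xs. set xs \<subseteq> {0..<n} \<and> length xs = 2 * n}"
  proof
    fix b assume b: "b \<in> Vec n"
    have "n \<ge> 1" if "x \<in> set b" for x using b that by (cases n) (auto simp: Vec_def)
    then show "b \<in> {xs. set xs \<subseteq> {0..<n} \<and> length xs = 2 * n}"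
      using b by (fastforce simp: Vec_def in_set_conv_nth)
  qed
  moreover have "finite {xs. set xs \<subseteq> {0..<n} \<and> length xs = 2 * n}"
    by (rule finite_lists_length_eq) simp
  ultimately show ?thesis by (rule finite_subset)
qed

definition is_glb :: "nat list set \<Rightarrow> nat list set \<Rightarrow> nat list \<Rightarrow> bool" where
  "is_glb M S z = (z \<in> M \<and> (\<forall>s\<in>S. vle z s) \<and> (\<forall>w\<in>M. (\<forall>s\<in>S. vle w s) \<longrightarrow> vle w z))"

lemma meet_in_eq: "is_glb M S z \<Longrightarrow> meet_in M S = z"
  unfolding meet_in_def
  by (rule the_equality) (auto simp: is_glb_def intro: vle_antisym)

lemma glb_exists:
  assumes S: "S \<subseteq> Vec n" "S \<noteq> {}"
  shows "\<exists>z. is_glb (Vec n) S z"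
proof -
  have fin: "finite S" using S Vec_finite finite_subset by blast
  define z where "z = map (\<lambda>i. Min ((\<lambda>s. s ! i) ` S)) [0..<2*n]"
  have lz: "length z = 2 * n" by (simp add: z_def)
  have zi: "z ! i = Min ((\<lambda>s. s ! i) ` S)" if "i < 2*n" for i
    using that by (simp add: z_def)
  have att: "\<exists>s\<in>S. z ! i = s ! i" if "i < 2*n" for i
  proof -
    have "Min ((\<lambda>s. s ! i) ` S) \<in> (\<lambda>s. s ! i) ` S"
      using fin S(2) by (intro Min_in) auto
    then show ?thesis using zi[OF that] by auto
  qed
  have le: "z ! i \<le> s ! i" if "i < 2*n" "s \<in> S" for i s
    using zi[OF that(1)] fin that(2) by simp
  have SV: "\<And>s. s \<in> S \<Longrightarrow> s \<in> Vec n" using S by blast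
  have zV: "z \<in> Vec n"
    unfolding Vec_def
  proof (intro CollectI conjI allI impI)
    show "length z = 2 * n" by (rule lz)
  next
    fix k assume k: "k < n"
    obtain s where s: "s \<in> S" "z ! (2*k+1) = s ! (2*k+1)" using att[of "2*k+1"] k by auto
    then show "z ! (2 * k + 1) = k" using SV[OF s(1)] k by (simp add: Vec_def)
  next
    fix i assume i: "i < 2*n"
    obtain s where s: "s \<in> S" "z ! i = s ! i" using att[OF i] by auto
    then show "i div 2 \<le> z ! i" using SV[OF s(1)] i by (simp add: Vec_def)
    show "z ! i \<le> n - 1" using s SV[OF s(1)] i by (simp add: Vec_def)
  next
    fix i j assume i: "i < 2*n" and j: "i + 1 \<le> j \<and> j \<le> 2 * (z ! i) + 1"
    obtain s where s: "s \<in> S" "z ! i = s ! i" using att[OF i] by auto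
    have sv: "s \<in> Vec n" using SV[OF s(1)] .
    have "s ! j \<le> s ! i" using sv i j s(2) by (simp add: Vec_def)
    moreover have "s ! i \<le> n - 1" using sv i by (simp add: Vec_def)
    hence "j < 2 * n" using j s(2) i by linarith
    ultimately show "z ! j \<le> z ! i" using le[OF _ s(1)] s(2) by fastforce
  qed
  have "is_glb (Vec n) S z"
    unfolding is_glb_def
  proof (intro conjI ballI impI)
    show "z \<in> Vec n" by (rule zV)
  next
    fix s assume "s \<in> S"
    then show "vle z s" using le SV[of s] lz by (auto simp: vle_nth Vec_def)
  next
    fix w assume w: "w \<in> Vec n" "\<forall>s\<in>S. vle w s"
    obtain s0 where s0: "s0 \<in> S" using S(2) by auto
    have lw: "length w = 2*n" using w(1) Vec_length by blast
    have "w ! i \<le> z ! i" if "i < 2*n" for i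
    proof -
      have "\<forall>s\<in>S. w ! i \<le> s ! i" using w(2) that lw by (auto simp: vle_nth)
      then show ?thesis using zi[OF that] fin S(2) by simp
    qed
    then show "vle w z" using lw lz by (simp add: vle_nth)
  qed
  then show ?thesis by blast
qed

definition botv :: "nat \<Rightarrow> nat list" where
  "botv n = map (\<lambda>i. i div 2) [0..<2*n]"

lemma botv_Vec: "botv n \<in> Vec n"
proof -
  have "j div 2 \<le> i div 2" if "i < 2*n" "Suc i \<le> j" "j \<le> Suc (2 * (i div 2))" for i j
    using that by linarith
  moreover have "j < 2 * n" if "i < 2*n" "Suc i \<le> j" "j \<le> Suc (2 * (i div 2))" for i j
    using that by presburger
  ultimately show ?thesis unfolding Vec_def botv_def by auto
qed

lemma botv_le: "b \<in> Vec n \<Longrightarrow> vle (botv n) b"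
  by (auto simp: vle_nth botv_def Vec_def)

lemma bot_in_eq: "bot_in (Vec n) = botv n"
  unfolding bot_in_def
  by (rule the_equality) (auto simp: botv_Vec botv_le intro: vle_antisym)



lemma vplus_nth1: "length b1 = 2*m \<Longrightarrow> i < 2*m \<Longrightarrow> vplus m b1 b2 ! i = b1 ! i"
  by (simp add: vplus_def nth_append)

lemma vplus_nth2: "length b1 = 2*m \<Longrightarrow> 2*m \<le> i \<Longrightarrow> i < 2*m + length b2 \<Longrightarrow>
   vplus m b1 b2 ! i = b2 ! (i - 2*m) + m"
  by (simp add: vplus_def nth_append)

lemma vplus_length: "length (vplus m b1 b2) = length b1 + length b2"
  by (simp add: vplus_def)

lemma join_Vec:
  assumes b1: "b1 \<in> Vec m" and b2: "b2 \<in> Vec p" and p: "p \<ge> 1"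
  shows "vplus m b1 b2 \<in> Vec (m + p)"
proof -
  let ?x = "vplus m b1 b2"
  have l1: "length b1 = 2*m" and l2: "length b2 = 2*p" using b1 b2 by (auto simp: Vec_def)
  have A: "\<And>k. k<m \<Longrightarrow> b1 ! (2*k+1) = k"
    and B: "\<And>i. i<2*m \<Longrightarrow> i div 2 \<le> b1 ! i \<and> b1 ! i \<le> m - 1"
    and C: "\<And>i j. i<2*m \<Longrightarrow> i + 1 \<le> j \<Longrightarrow> j \<le> 2 * (b1 ! i) + 1 \<Longrightarrow> b1 ! j \<le> b1 ! i"
    using b1 by (auto simp: Vec_def)
  have A2: "\<And>k. k<p \<Longrightarrow> b2 ! (2*k+1) = k"
    and B2: "\<And>i. i<2*p \<Longrightarrow> i div 2 \<le> b2 ! i \<and> b2 ! i \<le> p - 1"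
    and C2: "\<And>i j. i<2*p \<Longrightarrow> i + 1 \<le> j \<Longrightarrow> j \<le> 2 * (b2 ! i) + 1 \<Longrightarrow> b2 ! j \<le> b2 ! i"
    using b2 by (auto simp: Vec_def)
  note n1 = vplus_nth1[OF l1] and n2 = vplus_nth2[OF l1, of _ b2, unfolded l2]
  show ?thesis
    unfolding Vec_def
  proof (intro CollectI conjI allI impI)
    show "length ?x = 2 * (m + p)" by (simp add: vplus_length l1 l2)
  next
    fix k assume k: "k < m + p"
    show "?x ! (2*k+1) = k"
    proof (cases "k < m")
      case True then show ?thesis using n1 A by simp
    next
      case False
      have e: "2*k+1 - 2*m = 2*(k-m)+1" using False by simp
      have "?x ! (2*k+1) = b2 ! (2*k+1 - 2*m) + m"
        using n2[of "2*k+1"] k False by simp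
      then have "?x ! (2*k+1) = b2 ! (2*(k-m)+1) + m" by (simp only: e)
      then show ?thesis using A2[of "k-m"] k False by simp
    qed
  next
    fix i assume i: "i < 2*(m+p)"
    have "i div 2 \<le> ?x ! i \<and> ?x ! i \<le> m + p - 1"
    proof (cases "i < 2*m")
      case True then show ?thesis using n1 B[OF True] by auto
    next
      case False
      then have e: "?x ! i = b2 ! (i - 2*m) + m" using n2 i by simp
      have "i - 2*m < 2*p" using i False by simp
      from B2[OF this] have "(i - 2*m) div 2 \<le> b2 ! (i-2*m)" "b2 ! (i - 2*m) \<le> p - 1" by auto
      moreover have "(i - 2*m) div 2 = i div 2 - m" using False by presburger
      ultimately show ?thesis using e p False by (intro conjI; linarith)
    qed
    then show "i div 2 \<le> ?x ! i" "?x ! i \<le> m + p - 1" by auto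
  next
    fix i j assume i: "i < 2*(m+p)" and j: "i + 1 \<le> j \<and> j \<le> 2 * (?x ! i) + 1"
    show "?x ! j \<le> ?x ! i"
    proof (cases "i < 2*m")
      case True
      have bi: "b1 ! i \<le> m - 1" using B[OF True] by simp
      have xi: "?x ! i = b1 ! i" using n1 True by simp
      have "j < 2*m" using j bi xi p True by linarith
      then have xj: "?x ! j = b1 ! j" using n1 by simp
      have "b1 ! j \<le> b1 ! i" using C[OF True, of j] j xi by linarith
      then show ?thesis using xi xj by simp
    next
      case False
      have i2: "i - 2*m < 2*p" using i False by simp
      have xi: "?x ! i = b2 ! (i - 2*m) + m" using n2 i False by simp
      have bi: "b2 ! (i - 2*m) \<le> p - 1" using B2[OF i2] by simp
      have "?x ! i + 1 \<le> m + p" using xi bi p by linarith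
      then have jl: "j < 2*(m+p)" using j by (simp only: distrib_left mult_numeral_1; linarith)
      have xj: "?x ! j = b2 ! (j - 2*m) + m" using n2 jl False j by simp
      have "b2 ! (j - 2*m) \<le> b2 ! (i - 2*m)"
        using C2[OF i2, of "j - 2*m"] j xi False by linarith
      then show ?thesis using xi xj by simp
    qed
  qed
qed



lemma split_Vec:
  assumes y: "y \<in> Vec (m + p)" and m: "m \<ge> 1" and small: "\<forall>i<2*m. y ! i \<le> m - 1"
  shows "take (2*m) y \<in> Vec m \<and> map (\<lambda>x. x - m) (drop (2*m) y) \<in> Vec p \<and>
         y = vplus m (take (2*m) y) (map (\<lambda>x. x - m) (drop (2*m) y))"
proof -
  have ly: "length y = 2*(m+p)" using y by (simp add: Vec_def)
  have A: "\<And>k. k<m+p \<Longrightarrow> y ! (2*k+1) = k"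
    and B: "\<And>i. i<2*(m+p) \<Longrightarrow> i div 2 \<le> y ! i \<and> y ! i \<le> m + p - 1"
    and C: "\<And>i j. i<2*(m+p) \<Longrightarrow> i + 1 \<le> j \<Longrightarrow> j \<le> 2 * (y ! i) + 1 \<Longrightarrow> y ! j \<le> y ! i"
    using y by (auto simp: Vec_def)
  define y1 where "y1 = take (2*m) y"
  define y2 where "y2 = map (\<lambda>x. x - m) (drop (2*m) y)"
  have l1: "length y1 = 2*m" using ly by (simp add: y1_def)
  have l2: "length y2 = 2*p" using ly by (simp add: y2_def)
  have n1: "y1 ! i = y ! i" if "i < 2*m" for i using that by (simp add: y1_def)
  have n2: "y2 ! i = y ! (2*m + i) - m" if "i < 2*p" for i using that ly by (simp add: y2_def)
  have ge: "m \<le> y ! (2*m + i)" if "i < 2*p" for i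
  proof -
    have "(2*m+i) div 2 \<le> y ! (2*m+i)" using B[of "2*m+i"] that by simp
    moreover have "m \<le> (2*m+i) div 2" by simp
    ultimately show ?thesis by linarith
  qed
  have eq: "y = vplus m y1 y2"
  proof -
    have "map (\<lambda>x. x + m) y2 = drop (2*m) y"
    proof (rule nth_equalityI)
      show "length (map (\<lambda>x. x + m) y2) = length (drop (2 * m) y)" using l2 ly by simp
    next
      fix i assume "i < length (map (\<lambda>x. x + m) y2)"
      then have i: "i < 2*p" using l2 by simp
      then show "map (\<lambda>x. x + m) y2 ! i = drop (2 * m) y ! i"
        using n2[OF i] ge[OF i] ly l2 by simp
    qed
    then show ?thesis by (simp add: vplus_def y1_def)
  qed
  have v1: "y1 \<in> Vec m"
    unfolding Vec_def
  proof (intro CollectI conjI allI impI)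
    show "length y1 = 2*m" by (rule l1)
  next
    fix k assume "k < m" then show "y1 ! (2*k+1) = k" using n1 A by simp
  next
    fix i assume i: "i < 2*m"
    show "i div 2 \<le> y1 ! i" using B[of i] i n1 by simp
    show "y1 ! i \<le> m - 1" using small i n1 by simp
  next
    fix i j assume i: "i < 2*m" and j: "i + 1 \<le> j \<and> j \<le> 2 * (y1 ! i) + 1"
    have "y1 ! i \<le> m - 1" using small i n1 by simp
    then have jl: "j < 2*m" using j m by linarith
    have "y ! j \<le> y ! i" using C[of i j] i j n1 by simp
    then show "y1 ! j \<le> y1 ! i" using n1 i jl by simp
  qed
  have v2: "y2 \<in> Vec p"
    unfolding Vec_def
  proof (intro CollectI conjI allI impI)
    show "length y2 = 2*p" by (rule l2)
  next
    fix k assume k: "k < p"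
    have "y ! (2*(m+k)+1) = m + k" using A[of "m+k"] k by simp
    then show "y2 ! (2*k+1) = k" using n2[of "2*k+1"] k by (simp add: algebra_simps)
  next
    fix i assume i: "i < 2*p"
    have b: "(2*m+i) div 2 \<le> y ! (2*m+i) \<and> y ! (2*m+i) \<le> m + p - 1" using B[of "2*m+i"] i by simp
    have "(2*m+i) div 2 = m + i div 2" by simp
    then show "i div 2 \<le> y2 ! i" "y2 ! i \<le> p - 1" using b n2[OF i] by linarith+
  next
    fix i j assume i: "i < 2*p" and j: "i + 1 \<le> j \<and> j \<le> 2 * (y2 ! i) + 1"
    have b: "y ! (2*m+i) \<le> m + p - 1" using B[of "2*m+i"] i by simp
    have g: "m \<le> y ! (2*m+i)" using ge[OF i] .
    have yi: "y2 ! i = y ! (2*m+i) - m" using n2[OF i] .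
    have "y2 ! i + 1 \<le> p" using b g yi i by linarith
    then have jl: "j < 2*p" using j[THEN conjunct2] by (simp add: algebra_simps)
    have e2: "2 * (y2 ! i) = 2 * (y ! (2*m+i)) - 2*m" using yi by (simp add: diff_mult_distrib2)
    have "2*m + j \<le> 2 * (y ! (2*m+i)) + 1" using j[THEN conjunct2] e2 g by linarith
    moreover have "2*m+i < 2*(m+p)" using i by simp
    moreover have "2*m+i+1 \<le> 2*m+j" using j by simp
    ultimately have "y ! (2*m+j) \<le> y ! (2*m+i)" using C[of "2*m+i" "2*m+j"] by blast
    then show "y2 ! j \<le> y2 ! i" using n2[OF jl] yi by simp
  qed
  show ?thesis using v1 v2 eq unfolding y1_def y2_def by blast
qed

lemma vle_vplus:
  assumes "length a1 = length c1"
  shows "vle (vplus m a1 a2) (vplus m c1 c2) \<longleftrightarrow> vle a1 c1 \<and> vle a2 c2"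
  using assms unfolding vle_def vplus_def
  by (auto simp: list_all2_append list_all2_map1 list_all2_map2 dest: list_all2_lengthD)

lemma vplus_inj:
  assumes "length a1 = length c1"
  shows "vplus m a1 a2 = vplus m c1 c2 \<longleftrightarrow> a1 = c1 \<and> a2 = c2"
proof -
  have "inj (\<lambda>x::nat. x + m)" by (simp add: inj_on_def)
  then show ?thesis using assms by (auto simp: vplus_def inj_map_eq_map)
qed

lemma botv_vplus: "vplus m (botv m) (botv p) = botv (m + p)"
proof (rule nth_equalityI)
  show "length (vplus m (botv m) (botv p)) = length (botv (m + p))"
    by (simp add: vplus_def botv_def)
next
  fix i assume "i < length (vplus m (botv m) (botv p))"
  then have i: "i < 2*(m+p)" by (simp add: vplus_def botv_def)
  show "vplus m (botv m) (botv p) ! i = botv (m + p) ! i"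
  proof (cases "i < 2*m")
    case True then show ?thesis using i by (simp add: vplus_def botv_def nth_append)
  next
    case False
    then have "(i - 2*m) div 2 + m = i div 2" by presburger
    then show ?thesis using i False by (simp add: vplus_def botv_def nth_append)
  qed
qed



lemma Pop_glb:
  assumes "b \<in> Vec n"
  shows "is_glb (Vec n) ({y. covered_by (Vec n) y b} \<union> {b}) (Pop (Vec n) b)"
proof -
  have "{y. covered_by (Vec n) y b} \<union> {b} \<subseteq> Vec n" using assms by (auto simp: covered_by_def)
  then obtain z where z: "is_glb (Vec n) ({y. covered_by (Vec n) y b} \<union> {b}) z"
    using glb_exists by blast
  then show ?thesis unfolding Pop_def using meet_in_eq by metis
qed

lemma Pop_Vec: "b \<in> Vec n \<Longrightarrow> Pop (Vec n) b \<in> Vec n"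
  using Pop_glb is_glb_def by blast

lemma Popt_Vec: "b \<in> Vec n \<Longrightarrow> (Pop (Vec n) ^^ t) b \<in> Vec n"
  by (induction t) (auto simp: Pop_Vec)

context
  fixes m p b1 b2
  assumes m: "m \<ge> 1" and p: "p \<ge> 1" and b1: "b1 \<in> Vec m" and b2: "b2 \<in> Vec p"
begin

lemma down:
  assumes y: "y \<in> Vec (m+p)" and le: "vle y (vplus m b1 b2)"
  shows "\<exists>y1 y2. y1 \<in> Vec m \<and> y2 \<in> Vec p \<and> y = vplus m y1 y2"
proof -
  have l1: "length b1 = 2*m" using b1 Vec_length by blast
  have "\<forall>i<2*m. y ! i \<le> m - 1"
  proof (intro allI impI)
    fix i assume i: "i < 2*m"
    have "y ! i \<le> vplus m b1 b2 ! i" using le i y Vec_length by (auto simp: vle_nth)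
    also have "\<dots> = b1 ! i" using vplus_nth1[OF l1 i] .
    also have "\<dots> \<le> m - 1" using b1 i by (simp add: Vec_def)
    finally show "y ! i \<le> m - 1" .
  qed
  from split_Vec[OF y m this] show ?thesis by blast
qed

lemma vle_vp: "a1 \<in> Vec m \<Longrightarrow> c1 \<in> Vec m \<Longrightarrow>
   vle (vplus m a1 a2) (vplus m c1 c2) \<longleftrightarrow> vle a1 c1 \<and> vle a2 c2"
  by (rule vle_vplus) (simp add: Vec_length)

lemma eq_vp: "a1 \<in> Vec m \<Longrightarrow> c1 \<in> Vec m \<Longrightarrow>
   vplus m a1 a2 = vplus m c1 c2 \<longleftrightarrow> a1 = c1 \<and> a2 = c2"
  by (rule vplus_inj) (simp add: Vec_length)

lemma cov1:
  assumes c: "covered_by (Vec m) c1 b1"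
  shows "covered_by (Vec (m+p)) (vplus m c1 b2) (vplus m b1 b2)"
proof -
  have c1: "c1 \<in> Vec m" and lt: "vless c1 b1"
    and no: "\<not> (\<exists>z\<in>Vec m. vless c1 z \<and> vless z b1)" using c by (auto simp: covered_by_def)
  show ?thesis unfolding covered_by_def
  proof (intro conjI notI)
    show "vplus m c1 b2 \<in> Vec (m + p)" using join_Vec[OF c1 b2 p] .
    show "vplus m b1 b2 \<in> Vec (m + p)" using join_Vec[OF b1 b2 p] .
    show "vless (vplus m c1 b2) (vplus m b1 b2)"
      using lt c1 b1 by (simp add: vless_def vle_vp eq_vp)
  next
    assume "\<exists>z\<in>Vec (m + p). vless (vplus m c1 b2) z \<and> vless z (vplus m b1 b2)"
    then obtain z where z: "z \<in> Vec (m+p)" "vless (vplus m c1 b2) z" "vless z (vplus m b1 b2)" by blast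
    then obtain z1 z2 where zz: "z1 \<in> Vec m" "z2 \<in> Vec p" "z = vplus m z1 z2"
      using down vless_def by blast
    have "vle c1 z1" "vle b2 z2" "vle z1 b1" "vle z2 b2" "vplus m c1 b2 \<noteq> z" "z \<noteq> vplus m b1 b2"
      using z zz c1 b1 by (auto simp: vless_def vle_vp)
    then have "z2 = b2" "z1 \<noteq> c1" "z1 \<noteq> b1" using zz c1 b1 by (auto simp: eq_vp intro: vle_antisym)
    then show False using no zz \<open>vle c1 z1\<close> \<open>vle z1 b1\<close> by (auto simp: vless_def)
  qed
qed

lemma cov2:
  assumes c: "covered_by (Vec p) c2 b2"
  shows "covered_by (Vec (m+p)) (vplus m b1 c2) (vplus m b1 b2)"
proof -
  have c2: "c2 \<in> Vec p" and lt: "vless c2 b2"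
    and no: "\<not> (\<exists>z\<in>Vec p. vless c2 z \<and> vless z b2)" using c by (auto simp: covered_by_def)
  show ?thesis unfolding covered_by_def
  proof (intro conjI notI)
    show "vplus m b1 c2 \<in> Vec (m + p)" using join_Vec[OF b1 c2 p] .
    show "vplus m b1 b2 \<in> Vec (m + p)" using join_Vec[OF b1 b2 p] .
    show "vless (vplus m b1 c2) (vplus m b1 b2)"
      using lt b1 by (simp add: vless_def vle_vp eq_vp)
  next
    assume "\<exists>z\<in>Vec (m + p). vless (vplus m b1 c2) z \<and> vless z (vplus m b1 b2)"
    then obtain z where z: "z \<in> Vec (m+p)" "vless (vplus m b1 c2) z" "vless z (vplus m b1 b2)" by blast
    then obtain z1 z2 where zz: "z1 \<in> Vec m" "z2 \<in> Vec p" "z = vplus m z1 z2"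
      using down vless_def by blast
    have "vle b1 z1" "vle c2 z2" "vle z1 b1" "vle z2 b2" "vplus m b1 c2 \<noteq> z" "z \<noteq> vplus m b1 b2"
      using z zz b1 by (auto simp: vless_def vle_vp)
    then have "z1 = b1" "z2 \<noteq> c2" "z2 \<noteq> b2" using zz b1 by (auto simp: eq_vp intro: vle_antisym)
    then show False using no zz \<open>vle c2 z2\<close> \<open>vle z2 b2\<close> by (auto simp: vless_def)
  qed
qed

lemma covinv:
  assumes c: "covered_by (Vec (m+p)) y (vplus m b1 b2)"
  shows "\<exists>y1 y2. y = vplus m y1 y2 \<and> y1 \<in> Vec m \<and> y2 \<in> Vec p \<and>
     ((covered_by (Vec m) y1 b1 \<and> y2 = b2) \<or> (y1 = b1 \<and> covered_by (Vec p) y2 b2))"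
proof -
  have y: "y \<in> Vec (m+p)" and lt: "vless y (vplus m b1 b2)"
    and no: "\<not> (\<exists>z\<in>Vec (m+p). vless y z \<and> vless z (vplus m b1 b2))"
    using c by (auto simp: covered_by_def)
  obtain y1 y2 where yy: "y1 \<in> Vec m" "y2 \<in> Vec p" "y = vplus m y1 y2"
    using down y lt vless_def by blast
  have l1: "vle y1 b1" and l2: "vle y2 b2" and ne: "y1 \<noteq> b1 \<or> y2 \<noteq> b2"
    using lt yy b1 by (auto simp: vless_def vle_vp eq_vp)
  show ?thesis
  proof (cases "y1 = b1")
    case True
    then have ne2: "y2 \<noteq> b2" using ne by simp
    have "covered_by (Vec p) y2 b2" unfolding covered_by_def
    proof (intro conjI notI)
      show "y2 \<in> Vec p" "b2 \<in> Vec p" using yy b2 by auto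
      show "vless y2 b2" using l2 ne2 by (simp add: vless_def)
    next
      assume "\<exists>z\<in>Vec p. vless y2 z \<and> vless z b2"
      then obtain z where z: "z \<in> Vec p" "vless y2 z" "vless z b2" by blast
      have "z' \<in> Vec (m+p) \<and> vless y z' \<and> vless z' (vplus m b1 b2)" if "z' = vplus m b1 z" for z'
        using that z yy True b1 join_Vec[OF b1 z(1) p] by (auto simp: vless_def vle_vp eq_vp)
      then show False using no by blast
    qed
    then show ?thesis using yy True by blast
  next
    case False
    have e2: "y2 = b2"
    proof (rule ccontr)
      assume ne2: "y2 \<noteq> b2"
      have "vplus m y1 b2 \<in> Vec (m+p) \<and> vless y (vplus m y1 b2) \<and> vless (vplus m y1 b2) (vplus m b1 b2)"
        using yy b1 b2 l1 l2 ne2 False join_Vec[OF yy(1) b2 p] by (auto simp: vless_def vle_vp eq_vp)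
      then show False using no by blast
    qed
    have "covered_by (Vec m) y1 b1" unfolding covered_by_def
    proof (intro conjI notI)
      show "y1 \<in> Vec m" "b1 \<in> Vec m" using yy b1 by auto
      show "vless y1 b1" using l1 False by (simp add: vless_def)
    next
      assume "\<exists>z\<in>Vec m. vless y1 z \<and> vless z b1"
      then obtain z where z: "z \<in> Vec m" "vless y1 z" "vless z b1" by blast
      have "vplus m z b2 \<in> Vec (m+p) \<and> vless y (vplus m z b2) \<and> vless (vplus m z b2) (vplus m b1 b2)"
        using z yy e2 b1 join_Vec[OF z(1) b2 p] by (auto simp: vless_def vle_vp eq_vp)
      then show False using no by blast
    qed
    then show ?thesis using yy e2 by blast
  qed
qed

lemma Pop_vplus:
  "Pop (Vec (m+p)) (vplus m b1 b2) = vplus m (Pop (Vec m) b1) (Pop (Vec p) b2)"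
proof -
  define z1 where "z1 = Pop (Vec m) b1"
  define z2 where "z2 = Pop (Vec p) b2"
  have g1: "is_glb (Vec m) ({y. covered_by (Vec m) y b1} \<union> {b1}) z1"
    unfolding z1_def using Pop_glb[OF b1] .
  have g2: "is_glb (Vec p) ({y. covered_by (Vec p) y b2} \<union> {b2}) z2"
    unfolding z2_def using Pop_glb[OF b2] .
  have z1V: "z1 \<in> Vec m" and z2V: "z2 \<in> Vec p" using g1 g2 by (auto simp: is_glb_def)
  have z1l: "vle z1 b1" "\<And>c. covered_by (Vec m) c b1 \<Longrightarrow> vle z1 c"
    and z1g: "\<And>w. w \<in> Vec m \<Longrightarrow> vle w b1 \<Longrightarrow> (\<And>c. covered_by (Vec m) c b1 \<Longrightarrow> vle w c) \<Longrightarrow> vle w z1"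
    using g1 by (auto simp: is_glb_def)
  have z2l: "vle z2 b2" "\<And>c. covered_by (Vec p) c b2 \<Longrightarrow> vle z2 c"
    and z2g: "\<And>w. w \<in> Vec p \<Longrightarrow> vle w b2 \<Longrightarrow> (\<And>c. covered_by (Vec p) c b2 \<Longrightarrow> vle w c) \<Longrightarrow> vle w z2"
    using g2 by (auto simp: is_glb_def)
  have "is_glb (Vec (m+p)) ({y. covered_by (Vec (m+p)) y (vplus m b1 b2)} \<union> {vplus m b1 b2}) (vplus m z1 z2)"
    unfolding is_glb_def
  proof (intro conjI ballI impI)
    show "vplus m z1 z2 \<in> Vec (m + p)" using join_Vec[OF z1V z2V p] .
  next
    fix s assume "s \<in> {y. covered_by (Vec (m+p)) y (vplus m b1 b2)} \<union> {vplus m b1 b2}"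
    then consider "s = vplus m b1 b2" | "covered_by (Vec (m+p)) s (vplus m b1 b2)" by blast
    then show "vle (vplus m z1 z2) s"
    proof cases
      case 1 then show ?thesis using z1l z2l z1V b1 by (simp add: vle_vp)
    next
      case 2
      then obtain y1 y2 where yy: "s = vplus m y1 y2" "y1 \<in> Vec m" "y2 \<in> Vec p"
        "(covered_by (Vec m) y1 b1 \<and> y2 = b2) \<or> (y1 = b1 \<and> covered_by (Vec p) y2 b2)"
        using covinv by blast
      then show ?thesis using z1l z2l z1V by (auto simp: vle_vp)
    qed
  next
    fix w assume w: "w \<in> Vec (m+p)"
      and lb: "\<forall>s\<in>{y. covered_by (Vec (m+p)) y (vplus m b1 b2)} \<union> {vplus m b1 b2}. vle w s"
    then have wx: "vle w (vplus m b1 b2)" by blast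
    obtain w1 w2 where ww: "w1 \<in> Vec m" "w2 \<in> Vec p" "w = vplus m w1 w2"
      using down[OF w wx] by blast
    have w1b: "vle w1 b1" and w2b: "vle w2 b2" using wx ww b1 by (auto simp: vle_vp)
    have "vle w1 z1"
    proof (rule z1g[OF ww(1) w1b])
      fix c assume c: "covered_by (Vec m) c b1"
      then have "vle w (vplus m c b2)" using lb cov1 by blast
      moreover have "c \<in> Vec m" using c by (simp add: covered_by_def)
      ultimately show "vle w1 c" using ww by (simp add: vle_vp)
    qed
    moreover have "vle w2 z2"
    proof (rule z2g[OF ww(2) w2b])
      fix c assume c: "covered_by (Vec p) c b2"
      then have "vle w (vplus m b1 c)" using lb cov2 by blast
      then show "vle w2 c" using ww b1 by (simp add: vle_vp)
    qed
    ultimately show "vle w (vplus m z1 z2)" using ww z1V by (simp add: vle_vp)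
  qed
  then show ?thesis unfolding Pop_def z1_def z2_def using meet_in_eq by metis
qed

end



lemma Popt_vplus:
  assumes m: "m \<ge> 1" and p: "p \<ge> 1" and b1: "b1 \<in> Vec m" and b2: "b2 \<in> Vec p"
  shows "(Pop (Vec (m+p)) ^^ t) (vplus m b1 b2) = vplus m ((Pop (Vec m) ^^ t) b1) ((Pop (Vec p) ^^ t) b2)"
  using b1 b2
proof (induction t arbitrary: b1 b2)
  case 0 then show ?case by simp
next
  case (Suc t)
  have "(Pop (Vec (m+p)) ^^ Suc t) (vplus m b1 b2) = (Pop (Vec (m+p)) ^^ t) (Pop (Vec (m+p)) (vplus m b1 b2))"
    by (simp add: funpow_Suc_right del: funpow.simps)
  also have "\<dots> = (Pop (Vec (m+p)) ^^ t) (vplus m (Pop (Vec m) b1) (Pop (Vec p) b2))"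
    using Pop_vplus[OF m p Suc.prems] by simp
  also have "\<dots> = vplus m ((Pop (Vec m) ^^ t) (Pop (Vec m) b1)) ((Pop (Vec p) ^^ t) (Pop (Vec p) b2))"
    using Suc.IH Pop_Vec Suc.prems by blast
  also have "\<dots> = vplus m ((Pop (Vec m) ^^ Suc t) b1) ((Pop (Vec p) ^^ Suc t) b2)"
    by (simp add: funpow_Suc_right del: funpow.simps)
  finally show ?case .
qed

lemma sortable_vplus:
  assumes m: "m \<ge> 1" and p: "p \<ge> 1" and b1: "b1 \<in> Vec m" and b2: "b2 \<in> Vec p"
  shows "pop_sortable (Vec (m+p)) t (vplus m b1 b2) \<longleftrightarrow>
         pop_sortable (Vec m) t b1 \<and> pop_sortable (Vec p) t b2"
proof -
  have "(Pop (Vec m) ^^ t) b1 \<in> Vec m" using Popt_Vec[OF b1] .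
  then have "length ((Pop (Vec m) ^^ t) b1) = length (botv m)"
    using botv_Vec Vec_length by metis
  then show ?thesis unfolding pop_sortable_def bot_in_eq
    using Popt_vplus[OF assms, of t] botv_vplus[of m p] vplus_inj by metis
qed

lemma foldl_F:
  "foldl (\<lambda>(m, acc) (k, v). (m + k, vplus m acc v)) (a, acc) ps =
   (a + fst (foldl (\<lambda>(m, acc) (k, v). (m + k, vplus m acc v)) (0, []) ps),
    acc @ map (\<lambda>x. x + a) (snd (foldl (\<lambda>(m, acc) (k, v). (m + k, vplus m acc v)) (0, []) ps)))"
proof (induction ps arbitrary: a acc)
  case Nil then show ?case by simp
next
  case (Cons kv ps)
  obtain k v where kv: "kv = (k, v)" by (cases kv)
  define F where "F = (\<lambda>(m::nat, acc) (k::nat, v). (m + k, vplus m acc v))"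
  define S where "S = fst (foldl F (0, []) ps)"
  define W where "W = snd (foldl F (0, []) ps)"
  have IH: "\<And>a acc. foldl F (a, acc) ps = (a + S, acc @ map (\<lambda>x. x + a) W)"
    using Cons.IH unfolding F_def S_def W_def by blast
  have L: "foldl F (a, acc) (kv # ps) = (a + k + S, vplus a acc v @ map (\<lambda>x. x + (a + k)) W)"
    using IH[of "a+k" "vplus a acc v"] kv by (simp add: F_def)
  have R: "foldl F (0, []) (kv # ps) = (k + S, vplus 0 [] v @ map (\<lambda>x. x + k) W)"
    using IH[of k "vplus 0 [] v"] kv by (simp add: F_def)
  have "foldl F (a, acc) (kv # ps) =
    (a + fst (foldl F (0, []) (kv # ps)), acc @ map (\<lambda>x. x + a) (snd (foldl F (0, []) (kv # ps))))"
    unfolding L R by (simp add: vplus_def add_ac)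
  then show ?case unfolding F_def .
qed

lemma vsum_cons: "snd (vsum ((m, b1) # ps)) = vplus m b1 (snd (vsum ps))"
  unfolding vsum_def using foldl_F[of m "vplus 0 [] b1" ps] by (simp add: vplus_def)

lemma main:
  "n \<ge> 1 \<Longrightarrow> b \<in> Vec n \<Longrightarrow> \<exists>ps :: (nat \<times> nat list) list.
           ps \<noteq> [] \<and>
           (\<forall>(k, v) \<in> set ps. k \<ge> 1 \<and> v \<in> Vec k \<and> irreducible_vec k v) \<and>
           (\<Sum>(k, v) \<leftarrow> ps. k) = n \<and>
           snd (vsum ps) = b \<and>
           (\<forall>t :: nat. pop_sortable (Vec n) t b \<longleftrightarrow>
               (\<forall>(k, v) \<in> set ps. pop_sortable (Vec k) t v))"
proof (induction n arbitrary: b rule: less_induct)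
  case (less n)
  have nb: "n \<ge> 1" "b \<in> Vec n" by fact+
  have A: "\<And>k. k<n \<Longrightarrow> b ! (2*k+1) = k"
    and B: "\<And>i. i<2*n \<Longrightarrow> i div 2 \<le> b ! i \<and> b ! i \<le> n - 1"
    and C: "\<And>i j. i<2*n \<Longrightarrow> i + 1 \<le> j \<Longrightarrow> j \<le> 2 * (b ! i) + 1 \<Longrightarrow> b ! j \<le> b ! i"
    using nb by (auto simp: Vec_def)
  define m where "m = b ! 0 + 1"
  have m1: "m \<ge> 1" by (simp add: m_def)
  have mn: "m \<le> n" using B[of 0] nb(1) by (simp add: m_def)
  show ?case
  proof (cases "m = n")
    case True
    have e: "2*(n-1)+1 = 2*n - 1" using nb(1) by simp
    have "b ! (2*n-1) = n - 1" using A[of "n-1"] nb(1) unfolding e by simp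
    then have irr: "irreducible_vec n b"
      using True unfolding irreducible_vec_def m_def by simp
    have "snd (vsum [(n, b)]) = b" by (simp add: vsum_def vplus_def)
    then show ?thesis using nb irr by (intro exI[of _ "[(n,b)]"]) auto
  next
    case False
    define p where "p = n - m"
    have p1: "p \<ge> 1" and nmp: "n = m + p" using False mn by (auto simp: p_def)
    have small: "\<forall>i<2*m. b ! i \<le> m - 1"
    proof (intro allI impI)
      fix i assume i: "i < 2*m"
      show "b ! i \<le> m - 1"
      proof (cases "i = 0")
        case True then show ?thesis by (simp add: m_def)
      next
        case False
        have "b ! i \<le> b ! 0" using C[of 0 i] i False mn nb(1) unfolding m_def by simp
        then show ?thesis by (simp add: m_def)
      qed
    qed
    define b1 where "b1 = take (2*m) b"
    define b2 where "b2 = map (\<lambda>x. x - m) (drop (2*m) b)"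
    have bV: "b \<in> Vec (m+p)" using nb nmp by simp
    have sp: "b1 \<in> Vec m" "b2 \<in> Vec p" "b = vplus m b1 b2"
      using split_Vec[OF bV m1 small] unfolding b1_def b2_def by auto
    have pn: "p < n" using m1 nmp by simp
    obtain ps2 where ps2: "ps2 \<noteq> []"
      "\<forall>(k, v) \<in> set ps2. k \<ge> 1 \<and> v \<in> Vec k \<and> irreducible_vec k v"
      "(\<Sum>(k, v) \<leftarrow> ps2. k) = p" "snd (vsum ps2) = b2"
      "\<forall>t :: nat. pop_sortable (Vec p) t b2 \<longleftrightarrow> (\<forall>(k, v) \<in> set ps2. pop_sortable (Vec k) t v)"
      using less.IH[OF pn p1 sp(2)] by blast
    have b10: "b1 ! 0 = m - 1" using m1 by (simp add: b1_def m_def)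
    have "b1 ! (2*(m-1)+1) = m - 1" using sp(1) m1 by (simp add: Vec_def)
    moreover have "2*(m-1)+1 = 2*m - 1" using m1 by simp
    ultimately have irr: "irreducible_vec m b1" using b10 by (simp add: irreducible_vec_def)
    have vs: "snd (vsum ((m, b1) # ps2)) = b" using vsum_cons ps2(4) sp(3) by simp
    have pt: "\<forall>t. pop_sortable (Vec n) t b \<longleftrightarrow>
        (\<forall>(k, v) \<in> set ((m, b1) # ps2). pop_sortable (Vec k) t v)"
      using sortable_vplus[OF m1 p1 sp(1) sp(2)] ps2(5) sp(3) nmp by simp
    show ?thesis
      apply (rule exI[of _ "(m, b1) # ps2"])
      using ps2 irr sp m1 nmp vs pt by auto
  qed
qed


theorem lemma3p13:
  fixes n :: nat and b :: "nat list"
  assumes "n \<ge> 1" and "b \<in> Vec n"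
  shows "\<exists>ps :: (nat \<times> nat list) list.
           ps \<noteq> [] \<and>
           (\<forall>(k, v) \<in> set ps. k \<ge> 1 \<and> v \<in> Vec k \<and> irreducible_vec k v) \<and>
           (\<Sum>(k, v) \<leftarrow> ps. k) = n \<and>
           snd (vsum ps) = b \<and>
           (\<forall>t :: nat. pop_sortable (Vec n) t b \<longleftrightarrow>
               (\<forall>(k, v) \<in> set ps. pop_sortable (Vec k) t v))"
    using main assms by blast

end
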